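(* Let $k\ge1$ and let $A_k$ be the matrix defined below. The Graver basis $\mathcal{G}(A_k)$ is the disjoint union of the set $$\pm\left\{(-\mathbf{v}_1,\,-\mathbf{1}_k+\mathbf{v}_1,\,\mathbf{v}_2,\,\mathbf{1}_k-\mathbf{v}_2,\,-1,\,1)^{\mathsf T}:\mathbf{v}_1,\mathbf{v}_2\in\{0,1\}^k\right\}$$ and the sets $$\pm\left\{(\mathbf{e}_i,-\mathbf{e}_i,\mathbf{0}_k,\mathbf{0}_k,0,0)^{\mathsf T}:i\in[k]\right\},\qquad \pm\left\{(\mathbf{0}_k,\mathbf{0}_k,\mathbf{e}_i,-\mathbf{e}_i,0,0)^{\mathsf T}:i\in[k]\right\},$$ where $\mathbf{e}_1,\dots,\mathbf{e}_k$ are the standard unit vectors of $\mathbb{Z}^k$ and $\pm S:=S\cup(-S)$.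
   Context: $I_k$ is the $k\times k$ identity, $\mathbf{1}_k$ the all-ones vector and $\mathbf{0}_k$ the zero vector in $\mathbb{Z}^k$. Define $$A_k=\begin{pmatrix} I_k & I_k & 0 & 0 & -\mathbf{1}_k & \mathbf{0}\\ 0&0&I_k&I_k&\mathbf{0}&-\mathbf{1}_k\\ 0&0&0&0&1&1\end{pmatrix}\in\mathbb{Z}^{(2k+1)\times(4k+2)}$$ (zero blocks of appropriate sizes; last two columns are single columns). For vectors $\mathbf{u},\mathbf{v}\in\mathbb{Z}^n$, $\mathbf{u}\sqsubseteq\mathbf{v}$ iff $u_iv_i\ge0$ and $|u_i|\le|v_i|$ for all $i$. The Graver basis $\mathcal{G}(A)$ of $A\in\mathbb{Z}^{d\times n}$ is the set of $\sqsubseteq$-minimal elements of $(\ker(A)\cap\mathbb{Z}^n)\setminus\{\mathbf{0}\}$. *)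

theory Defs
  imports Main
begin

text \<open>Integer vectors in Z^n are represented as functions nat => int that vanish
  outside {0..<n}; a d x n integer matrix as a function nat => nat => int
  (row index, column index), only entries with row < d and column < n matter.\<close>

definition zvecs :: "nat \<Rightarrow> (nat \<Rightarrow> int) set" where
  "zvecs n = {u. \<forall>i\<ge>n. u i = 0}"

definition conformal_le :: "nat \<Rightarrow> (nat \<Rightarrow> int) \<Rightarrow> (nat \<Rightarrow> int) \<Rightarrow> bool" where
  "conformal_le n u v \<longleftrightarrow> (\<forall>i<n. u i * v i \<ge> 0 \<and> \<bar>u i\<bar> \<le> \<bar>v i\<bar>)"

definition int_kernel :: "nat \<Rightarrow> nat \<Rightarrow> (nat \<Rightarrow> nat \<Rightarrow> int) \<Rightarrow> (nat \<Rightarrow> int) set" where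
  "int_kernel d n A = {u \<in> zvecs n. \<forall>r<d. (\<Sum>j<n. A r j * u j) = 0}"

definition graver_basis :: "nat \<Rightarrow> nat \<Rightarrow> (nat \<Rightarrow> nat \<Rightarrow> int) \<Rightarrow> (nat \<Rightarrow> int) set" where
  "graver_basis d n A =
     {u \<in> int_kernel d n A - {(\<lambda>_. 0)}.
        \<forall>v \<in> int_kernel d n A - {(\<lambda>_. 0)}. conformal_le n v u \<longrightarrow> v = u}"

text \<open>The matrix A_k of size (2k+1) x (4k+2). Columns: block 1 = 0..<k, block 2 = k..<2k,
  block 3 = 2k..<3k, block 4 = 3k..<4k, then columns 4k and 4k+1.
  Rows: 0..<k, k..<2k, and row 2k.\<close>
definition A_mat :: "nat \<Rightarrow> nat \<Rightarrow> nat \<Rightarrow> int" where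
  "A_mat k r j =
    (if r < k then
        (if j = r \<or> j = k + r then 1 else if j = 4*k then -1 else 0)
     else if r < 2*k then
        (if j = 2*k + (r - k) \<or> j = 3*k + (r - k) then 1 else if j = 4*k + 1 then -1 else 0)
     else if r = 2*k then
        (if j = 4*k \<or> j = 4*k + 1 then 1 else 0)
     else 0)"

definition blocks :: "nat \<Rightarrow> (nat \<Rightarrow> int) \<Rightarrow> (nat \<Rightarrow> int) \<Rightarrow> (nat \<Rightarrow> int) \<Rightarrow> (nat \<Rightarrow> int)
                      \<Rightarrow> int \<Rightarrow> int \<Rightarrow> (nat \<Rightarrow> int)" where
  "blocks k x1 x2 x3 x4 a b = (\<lambda>j.
     if j < k then x1 j
     else if j < 2*k then x2 (j - k)
     else if j < 3*k then x3 (j - 2*k)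
     else if j < 4*k then x4 (j - 3*k)
     else if j = 4*k then a
     else if j = 4*k + 1 then b
     else 0)"

definition pm :: "(nat \<Rightarrow> int) set \<Rightarrow> (nat \<Rightarrow> int) set" where
  "pm S = S \<union> (\<lambda>u. - u) ` S"

definition unitv :: "nat \<Rightarrow> nat \<Rightarrow> int" where
  "unitv i = (\<lambda>j. if j = i then 1 else 0)"

definition S1 :: "nat \<Rightarrow> (nat \<Rightarrow> int) set" where
  "S1 k = pm {blocks k (\<lambda>j. - v1 j) (\<lambda>j. -1 + v1 j) v2 (\<lambda>j. 1 - v2 j) (-1) 1 | v1 v2.
              (\<forall>j<k. v1 j \<in> {0,1}) \<and> (\<forall>j<k. v2 j \<in> {0,1})}"

definition S2 :: "nat \<Rightarrow> (nat \<Rightarrow> int) set" where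
  "S2 k = pm {blocks k (unitv i) (\<lambda>j. - unitv i j) (\<lambda>_. 0) (\<lambda>_. 0) 0 0 | i. i < k}"

definition S3 :: "nat \<Rightarrow> (nat \<Rightarrow> int) set" where
  "S3 k = pm {blocks k (\<lambda>_. 0) (\<lambda>_. 0) (unitv i) (\<lambda>j. - unitv i j) 0 0 | i. i < k}"

end

theory Submission
  imports Defs
begin

lemma all_idx:
  fixes k :: nat
  assumes "\<And>i. i<k \<Longrightarrow> P i \<and> P (k+i) \<and> P (2*k+i) \<and> P (3*k+i)"
    and "P (4*k)" and "P (4*k+1)"
  shows "\<forall>j<4*k+2. P j"
proof (intro allI impI)
  fix j assume j: "j < 4*k+2"
  consider "j<k" | "k\<le>j \<and> j<2*k" | "2*k\<le>j \<and> j<3*k" | "3*k\<le>j \<and> j<4*k"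
    | "j=4*k" | "j=4*k+1" using j by linarith
  then show "P j"
  proof cases
    case 1 then show ?thesis using assms(1)[of j] by auto
  next
    case 2
    then have "k + (j-k) = j" "j - k < k" by auto
    then show ?thesis using assms(1)[of "j-k"] by metis
  next
    case 3
    then have "2*k + (j-2*k) = j" "j - 2*k < k" by auto
    then show ?thesis using assms(1)[of "j-2*k"] by metis
  next
    case 4
    then have "3*k + (j-3*k) = j" "j - 3*k < k" by auto
    then show ?thesis using assms(1)[of "j-3*k"] by metis
  qed (use assms in auto)
qed

lemma blocks_1[simp]: "i<k \<Longrightarrow> blocks k x1 x2 x3 x4 a b i = x1 i" by (simp add: blocks_def)
lemma blocks_2[simp]: "i<k \<Longrightarrow> blocks k x1 x2 x3 x4 a b (k+i) = x2 i" by (simp add: blocks_def)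
lemma blocks_3[simp]: "i<k \<Longrightarrow> blocks k x1 x2 x3 x4 a b (2*k+i) = x3 i" by (simp add: blocks_def)
lemma blocks_4[simp]: "i<k \<Longrightarrow> blocks k x1 x2 x3 x4 a b (3*k+i) = x4 i" by (simp add: blocks_def)
lemma blocks_a[simp]: "blocks k x1 x2 x3 x4 a b (4*k) = a" by (simp add: blocks_def)
lemma blocks_b[simp]: "blocks k x1 x2 x3 x4 a b (4*k+1) = b" by (simp add: blocks_def)
lemma blocks_b'[simp]: "blocks k x1 x2 x3 x4 a b (Suc (4*k)) = b" by (simp add: blocks_def)
lemma blocks_z: "j \<ge> 4*k+2 \<Longrightarrow> blocks k x1 x2 x3 x4 a b j = 0" by (simp add: blocks_def)

definition Kp :: "nat \<Rightarrow> (nat\<Rightarrow>int) \<Rightarrow> bool" where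
 "Kp k u \<longleftrightarrow> u \<in> zvecs (4*k+2) \<and> (\<forall>i<k. u i + u (k+i) = u (4*k))
    \<and> (\<forall>i<k. u (2*k+i) + u (3*k+i) = u (4*k+1)) \<and> u (4*k) + u (4*k+1) = 0"

lemma row1: assumes "r<k"
  shows "(\<Sum>j<4*k+2. A_mat k r j * u j) = u r + u (k+r) - u (4*k)"
proof -
  have "\<And>j. A_mat k r j * u j = (if j = r then u j else 0) + (if j = k+r then u j else 0)
      - (if j = 4*k then u j else 0)"
    using assms by (auto simp: A_mat_def)
  then have "(\<Sum>j<4*k+2. A_mat k r j * u j) = (\<Sum>j<4*k+2. (if j = r then u j else 0)
     + (if j = k+r then u j else 0) - (if j = 4*k then u j else 0))" by simp
  also have "\<dots> = u r + u (k+r) - u (4*k)" using assms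
    by (simp add: sum.distrib sum_subtractf sum.delta)
  finally show ?thesis .
qed

lemma row2: assumes "i<k"
  shows "(\<Sum>j<4*k+2. A_mat k (k+i) j * u j) = u (2*k+i) + u (3*k+i) - u (4*k+1)"
proof -
  have "\<And>j. A_mat k (k+i) j * u j = (if j = 2*k+i then u j else 0) + (if j = 3*k+i then u j else 0)
      - (if j = 4*k+1 then u j else 0)"
    using assms by (auto simp: A_mat_def)
  then have "(\<Sum>j<4*k+2. A_mat k (k+i) j * u j) = (\<Sum>j<4*k+2. (if j = 2*k+i then u j else 0)
     + (if j = 3*k+i then u j else 0) - (if j = 4*k+1 then u j else 0))" by simp
  also have "\<dots> = u (2*k+i) + u (3*k+i) - u (4*k+1)" using assms
    by (simp add: sum.distrib sum_subtractf sum.delta)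
  finally show ?thesis .
qed

lemma row3:
  shows "(\<Sum>j<4*k+2. A_mat k (2*k) j * u j) = u (4*k) + u (4*k+1)"
proof -
  have "\<And>j. A_mat k (2*k) j * u j = (if j = 4*k then u j else 0) + (if j = 4*k+1 then u j else 0)"
    by (auto simp: A_mat_def)
  then have "(\<Sum>j<4*k+2. A_mat k (2*k) j * u j) = (\<Sum>j<4*k+2. (if j = 4*k then u j else 0)
     + (if j = 4*k+1 then u j else 0))" by simp
  also have "\<dots> = u (4*k) + u (4*k+1)"
    by (simp add: sum.distrib sum.delta)
  finally show ?thesis .
qed

lemma kernel_iff: "u \<in> int_kernel (2*k+1) (4*k+2) (A_mat k) \<longleftrightarrow> Kp k u"
proof
  assume h: "u \<in> int_kernel (2*k+1) (4*k+2) (A_mat k)"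
  then have z: "u \<in> zvecs (4*k+2)" and r: "\<And>r. r<2*k+1 \<Longrightarrow> (\<Sum>j<4*k+2. A_mat k r j * u j) = 0"
    by (auto simp: int_kernel_def)
  show "Kp k u" unfolding Kp_def
  proof (intro conjI allI impI z)
    fix i assume "i<k"
    then show "u i + u (k+i) = u (4*k)" using r[of i] row1[of i k u] by simp
  next
    fix i assume "i<k"
    then show "u (2*k+i) + u (3*k+i) = u (4*k+1)" using r[of "k+i"] row2[of i k u] by simp
  next
    show "u (4*k) + u (4*k+1) = 0" using r[of "2*k"] row3[of k u] by simp
  qed
next
  assume h: "Kp k u"
  show "u \<in> int_kernel (2*k+1) (4*k+2) (A_mat k)" unfolding int_kernel_def
  proof (intro CollectI conjI allI impI)
    show "u \<in> zvecs (4*k+2)" using h by (simp add: Kp_def)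
  next
    fix r assume r: "r < 2*k+1"
    consider "r<k" | "k\<le>r \<and> r<2*k" | "r=2*k" using r by linarith
    then show "(\<Sum>j<4*k+2. A_mat k r j * u j) = 0"
    proof cases
      case 1 then show ?thesis using row1[of r k u] h by (simp add: Kp_def)
    next
      case 2
      then have e: "r = k + (r-k)" "r-k<k" by auto
      show ?thesis using row2[OF e(2), of u] h e(2) by (subst e(1)) (simp add: Kp_def)
    next
      case 3 then show ?thesis using row3[of k u] h by (simp add: Kp_def)
    qed
  qed
qed

lemma Kp_ext:
  assumes "Kp k v" "Kp k w" "\<forall>j<4*k+2. v j = w j" shows "v = w"
proof
  fix j show "v j = w j"
  proof (cases "j < 4*k+2")
    case False then show ?thesis using assms by (auto simp: Kp_def zvecs_def)
  qed (use assms in auto)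
qed

lemma Kp_zero: "Kp k (\<lambda>_. 0)" by (simp add: Kp_def zvecs_def)

lemma Kp_neg: "Kp k u \<Longrightarrow> Kp k (- u)"
  by (auto simp: Kp_def zvecs_def)

lemma conf_neg: "conformal_le n w (- u) \<Longrightarrow> conformal_le n (- w) u"
  by (simp add: conformal_le_def)

lemma conf_neg': "conformal_le n (- v) (- w) \<Longrightarrow> conformal_le n v w"
  by (simp add: conformal_le_def)

lemma conf_at: "conformal_le n v w \<Longrightarrow> j<n \<Longrightarrow> v j * w j \<ge> 0 \<and> \<bar>v j\<bar> \<le> \<bar>w j\<bar>"
  by (simp add: conformal_le_def)

definition P1 :: "nat \<Rightarrow> (nat \<Rightarrow> int) set" where
  "P1 k = {blocks k (\<lambda>j. - v1 j) (\<lambda>j. -1 + v1 j) v2 (\<lambda>j. 1 - v2 j) (-1) 1 | v1 v2.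
              (\<forall>j<k. v1 j \<in> {0,1}) \<and> (\<forall>j<k. v2 j \<in> {0,1})}"
definition P2 :: "nat \<Rightarrow> (nat \<Rightarrow> int) set" where
  "P2 k = {blocks k (unitv i) (\<lambda>j. - unitv i j) (\<lambda>_. 0) (\<lambda>_. 0) 0 0 | i. i < k}"
definition P3 :: "nat \<Rightarrow> (nat \<Rightarrow> int) set" where
  "P3 k = {blocks k (\<lambda>_. 0) (\<lambda>_. 0) (unitv i) (\<lambda>j. - unitv i j) 0 0 | i. i < k}"

lemma S_eq: "S1 k = pm (P1 k)" "S2 k = pm (P2 k)" "S3 k = pm (P3 k)"
  by (simp_all add: S1_def P1_def S2_def P2_def S3_def P3_def)

lemma pm_cases: "x \<in> pm S \<Longrightarrow> (\<And>y. y\<in>S \<Longrightarrow> P y) \<Longrightarrow> (\<And>y. y \<in> S \<Longrightarrow> P (- y)) \<Longrightarrow> P x"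
  by (auto simp: pm_def)

lemma pm_I1: "x \<in> S \<Longrightarrow> x \<in> pm S" by (simp add: pm_def)
lemma pm_I2: "x \<in> S \<Longrightarrow> - x \<in> pm S" by (simp add: pm_def)

lemma blocks_zvecs[simp]: "blocks k x1 x2 x3 x4 a b \<in> zvecs (4*k+2)"
  by (simp add: zvecs_def blocks_z)
lemma blocks_zvecs'[simp]: "blocks k x1 x2 x3 x4 a b \<in> zvecs (Suc (Suc (4*k)))"
  using blocks_zvecs by simp

lemma L1_P1: "w \<in> P1 k \<Longrightarrow> Kp k w \<and> w \<noteq> (\<lambda>_. 0)"
  by (auto simp: P1_def Kp_def blocks_zvecs dest!: fun_cong[where x="4*k"])

lemma L1_P2: "w \<in> P2 k \<Longrightarrow> Kp k w \<and> w \<noteq> (\<lambda>_. 0)"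
proof -
  assume "w \<in> P2 k"
  then obtain i where i: "i<k" and w: "w = blocks k (unitv i) (\<lambda>j. - unitv i j) (\<lambda>_. 0) (\<lambda>_. 0) 0 0"
    by (auto simp: P2_def)
  have "Kp k w" unfolding w Kp_def by (simp add: blocks_zvecs)
  moreover have "w i = 1" using i by (simp add: w unitv_def)
  ultimately show ?thesis by auto
qed

lemma L1_P3: "w \<in> P3 k \<Longrightarrow> Kp k w \<and> w \<noteq> (\<lambda>_. 0)"
proof -
  assume "w \<in> P3 k"
  then obtain i where i: "i<k" and w: "w = blocks k (\<lambda>_. 0) (\<lambda>_. 0) (unitv i) (\<lambda>j. - unitv i j) 0 0"
    by (auto simp: P3_def)
  have "Kp k w" unfolding w Kp_def by (simp add: blocks_zvecs)
  moreover have "w (2*k+i) = 1" using i by (simp add: w unitv_def)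
  ultimately show ?thesis by auto
qed

lemma nz_neg: "w \<noteq> (\<lambda>_. 0) \<Longrightarrow> - w \<noteq> (\<lambda>_. (0::int))"
  by (auto simp: fun_eq_iff)

lemma L1: "w \<in> S1 k \<union> S2 k \<union> S3 k \<Longrightarrow> Kp k w \<and> w \<noteq> (\<lambda>_. 0)"
proof -
  have a: "Kp k w \<and> w \<noteq> (\<lambda>_. 0)" if "w \<in> P1 k \<union> P2 k \<union> P3 k" for w
    using that L1_P1 L1_P2 L1_P3 by blast
  have b: "Kp k (- w) \<and> - w \<noteq> (\<lambda>_. 0)" if "w \<in> P1 k \<union> P2 k \<union> P3 k" for w
    using a[OF that] Kp_neg nz_neg by blast
  assume "w \<in> S1 k \<union> S2 k \<union> S3 k"
  then show ?thesis unfolding S_eq pm_def using a b by (auto simp: fun_eq_iff)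
qed


lemma L2a:
  assumes K: "Kp k u" and neg: "u (4*k) < 0"
  shows "\<exists>w\<in>P1 k. conformal_le (4*k+2) w u"
proof -
  define v1 :: "nat\<Rightarrow>int" where "v1 j = (if u j < 0 then 1 else 0)" for j
  define v2 :: "nat\<Rightarrow>int" where "v2 j = (if u (2*k+j) > 0 then 1 else 0)" for j
  let ?w = "blocks k (\<lambda>j. - v1 j) (\<lambda>j. -1 + v1 j) v2 (\<lambda>j. 1 - v2 j) (-1) 1"
  have "?w \<in> P1 k" unfolding P1_def
    by (rule CollectI, rule exI[of _ v1], rule exI[of _ v2]) (auto simp: v1_def v2_def)
  moreover have "conformal_le (4*k+2) ?w u"
    unfolding conformal_le_def
  proof (rule all_idx)
    fix i assume i: "i<k"
    have e1: "u i + u (k+i) = u (4*k)" and e2: "u (2*k+i) + u(3*k+i) = u (4*k+1)"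
      and e3: "u (4*k) + u(4*k+1) = 0"
      using K i by (auto simp: Kp_def)
    show "(0 \<le> ?w i * u i \<and> \<bar>?w i\<bar> \<le> \<bar>u i\<bar>) \<and>
        (0 \<le> ?w (k+i) * u (k+i) \<and> \<bar>?w (k+i)\<bar> \<le> \<bar>u (k+i)\<bar>) \<and>
        (0 \<le> ?w (2*k+i) * u (2*k+i) \<and> \<bar>?w (2*k+i)\<bar> \<le> \<bar>u (2*k+i)\<bar>) \<and>
        0 \<le> ?w (3*k+i) * u (3*k+i) \<and> \<bar>?w (3*k+i)\<bar> \<le> \<bar>u (3*k+i)\<bar>"
      using i e1 e2 e3 neg by (auto simp: v1_def v2_def)
  next
    show "0 \<le> ?w (4*k) * u (4*k) \<and> \<bar>?w (4*k)\<bar> \<le> \<bar>u (4*k)\<bar>" using neg by simp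
  next
    have "u (4*k) + u(4*k+1) = 0" using K by (auto simp: Kp_def)
    then show "0 \<le> ?w (4*k+1) * u (4*k+1) \<and> \<bar>?w (4*k+1)\<bar> \<le> \<bar>u (4*k+1)\<bar>" using neg by simp
  qed
  ultimately show ?thesis by blast
qed

lemma L2b:
  assumes K: "Kp k u" and z: "u (4*k) = 0" and i0: "i0<k" and pos: "u i0 > 0"
  shows "\<exists>w\<in>P2 k. conformal_le (4*k+2) w u"
proof -
  let ?w = "blocks k (unitv i0) (\<lambda>j. - unitv i0 j) (\<lambda>_. 0) (\<lambda>_. 0) 0 0"
  have "?w \<in> P2 k" unfolding P2_def using i0 by auto
  moreover have "conformal_le (4*k+2) ?w u"
    unfolding conformal_le_def
  proof (rule all_idx)
    fix i assume i: "i<k"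
    have e1: "u i0 + u (k+i0) = u (4*k)"
      using K i0 by (auto simp: Kp_def)
    show "(0 \<le> ?w i * u i \<and> \<bar>?w i\<bar> \<le> \<bar>u i\<bar>) \<and>
        (0 \<le> ?w (k+i) * u (k+i) \<and> \<bar>?w (k+i)\<bar> \<le> \<bar>u (k+i)\<bar>) \<and>
        (0 \<le> ?w (2*k+i) * u (2*k+i) \<and> \<bar>?w (2*k+i)\<bar> \<le> \<bar>u (2*k+i)\<bar>) \<and>
        0 \<le> ?w (3*k+i) * u (3*k+i) \<and> \<bar>?w (3*k+i)\<bar> \<le> \<bar>u (3*k+i)\<bar>"
      using i e1 z pos by (auto simp: unitv_def)
  qed (auto)
  ultimately show ?thesis by blast
qed

lemma L2c:
  assumes K: "Kp k u" and z: "u (4*k) = 0" and i0: "i0<k" and pos: "u (2*k+i0) > 0"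
  shows "\<exists>w\<in>P3 k. conformal_le (4*k+2) w u"
proof -
  let ?w = "blocks k (\<lambda>_. 0) (\<lambda>_. 0) (unitv i0) (\<lambda>j. - unitv i0 j) 0 0"
  have "?w \<in> P3 k" unfolding P3_def using i0 by auto
  moreover have "conformal_le (4*k+2) ?w u"
    unfolding conformal_le_def
  proof (rule all_idx)
    fix i assume i: "i<k"
    have e1: "u (2*k+i0) + u (3*k+i0) = u (4*k+1)" and e3: "u (4*k) + u(4*k+1) = 0"
      using K i0 by (auto simp: Kp_def)
    show "(0 \<le> ?w i * u i \<and> \<bar>?w i\<bar> \<le> \<bar>u i\<bar>) \<and>
        (0 \<le> ?w (k+i) * u (k+i) \<and> \<bar>?w (k+i)\<bar> \<le> \<bar>u (k+i)\<bar>) \<and>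
        (0 \<le> ?w (2*k+i) * u (2*k+i) \<and> \<bar>?w (2*k+i)\<bar> \<le> \<bar>u (2*k+i)\<bar>) \<and>
        0 \<le> ?w (3*k+i) * u (3*k+i) \<and> \<bar>?w (3*k+i)\<bar> \<le> \<bar>u (3*k+i)\<bar>"
      using i e1 e3 z pos by (auto simp: unitv_def)
  qed (auto)
  ultimately show ?thesis by blast
qed

lemma L2:
  assumes K: "Kp k u" and nz: "u \<noteq> (\<lambda>_. 0)"
  shows "\<exists>w\<in>S1 k \<union> S2 k \<union> S3 k. conformal_le (4*k+2) w u"
proof -
  have negS: "- w \<in> S1 k \<union> S2 k \<union> S3 k" if "w \<in> P1 k \<union> P2 k \<union> P3 k" for w
  proof -
    have "- w \<in> (\<lambda>u. - u) ` (P1 k) \<or> - w \<in> (\<lambda>u. - u) ` (P2 k) \<or> - w \<in> (\<lambda>u. - u) ` (P3 k)"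
      using that by blast
    then show ?thesis unfolding S_eq pm_def by blast
  qed
  have posS: "w \<in> S1 k \<union> S2 k \<union> S3 k" if "w \<in> P1 k \<union> P2 k \<union> P3 k" for w
    using that unfolding S_eq pm_def by blast
  have flip: "\<exists>w\<in>S1 k \<union> S2 k \<union> S3 k. conformal_le (4*k+2) w u"
     if h: "\<exists>w\<in>P1 k \<union> P2 k \<union> P3 k. conformal_le (4*k+2) w (- u)"
  proof -
    obtain w where w: "w \<in> P1 k \<union> P2 k \<union> P3 k" "conformal_le (4*k+2) w (- u)" using h by blast
    show ?thesis using negS[OF w(1)] conf_neg[OF w(2)] by blast
  qed
  have direct: "\<exists>w\<in>S1 k \<union> S2 k \<union> S3 k. conformal_le (4*k+2) w u"
     if "\<exists>w\<in>P1 k \<union> P2 k \<union> P3 k. conformal_le (4*k+2) w u"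
    using that posS by blast
  have Kn: "Kp k (-u)" using Kp_neg K .
  consider "u (4*k) < 0" | "u(4*k) > 0" | "u(4*k) = 0" by linarith
  then show ?thesis
  proof cases
    case 1 then show ?thesis using L2a[OF K] direct by blast
  next
    case 2 then have "(-u) (4*k) < 0" by simp
    then show ?thesis using L2a[OF Kn] flip by blast
  next
    case 3
    note a0 = 3
    have "\<exists>i<k. u i \<noteq> 0 \<or> u (2*k+i) \<noteq> 0"
    proof (rule ccontr)
      assume "\<not> ?thesis"
      then have h: "\<forall>i<k. u i = 0 \<and> u (2*k+i) = 0" by auto
      have a1: "u (4*k+1) = 0" using K a0 by (auto simp: Kp_def)
      have "u = (\<lambda>_. 0)"
      proof (rule Kp_ext[OF K Kp_zero])
        show "\<forall>j<4*k+2. u j = 0"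
        proof (rule all_idx)
          fix i assume i: "i<k"
          have "u i + u (k+i) = u (4*k)" "u (2*k+i) + u(3*k+i) = u (4*k+1)"
            using K i by (auto simp: Kp_def)
          then show "u i = 0 \<and> u (k+i) = 0 \<and> u (2*k+i) = 0 \<and> u (3*k+i) = 0"
            using h i a0 a1 by auto
        qed (use a0 a1 in auto)
      qed
      with nz show False ..
    qed
    then obtain i where i: "i<k" "u i \<noteq> 0 \<or> u (2*k+i) \<noteq> 0" by blast
    have Kn': "(-u) (4*k) = 0" using a0 by simp
    consider "u i > 0" | "u i < 0" | "u (2*k+i) > 0" | "u(2*k+i) < 0" using i by linarith
    then show ?thesis
    proof cases
      case 1 then show ?thesis using L2b[OF K a0 i(1)] direct by blast
    next
      case 2 then have "(-u) i > 0" by simp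
      then show ?thesis using L2b[OF Kn Kn' i(1)] flip by blast
    next
      case 3 then show ?thesis using L2c[OF K a0 i(1)] direct by blast
    next
      case 4 then have "(-u) (2*k+i) > 0" by simp
      then show ?thesis using L2c[OF Kn Kn' i(1)] flip by blast
    qed
  qed
qed

lemma arith2:
  fixes x y p q s :: int
  assumes "s = 1 \<or> s = -1" "(p = 0 \<and> q = s) \<or> (p = s \<and> q = 0)"
    "x*p \<ge> 0" "\<bar>x\<bar> \<le> \<bar>p\<bar>" "y*q \<ge> 0" "\<bar>y\<bar> \<le> \<bar>q\<bar>"
  shows "(x+y = s \<longrightarrow> x = p \<and> y = q) \<and> (x+y = 0 \<longrightarrow> x = 0 \<and> y = 0)"
  using assms by (elim disjE conjE; simp; linarith)


lemma L3_P1: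
  assumes w: "w \<in> P1 k" and K: "Kp k v" and nz: "v \<noteq> (\<lambda>_. 0)" and c: "conformal_le (4*k+2) v w"
  shows "v = w"
proof -
  obtain v1 v2 where wd: "w = blocks k (\<lambda>j. - v1 j) (\<lambda>j. -1 + v1 j) v2 (\<lambda>j. 1 - v2 j) (-1) 1"
    and b1: "\<forall>j<k. v1 j \<in> {0,1}" and b2: "\<forall>j<k. v2 j \<in> {0,1}" using w by (auto simp: P1_def)
  have Kw: "Kp k w" using L1_P1 w by blast
  have C: "v j * w j \<ge> 0 \<and> \<bar>v j\<bar> \<le> \<bar>w j\<bar>" if "j < 4*k+2" for j using conf_at[OF c that] .
  have ka: "v (4*k) = 0 \<or> v (4*k) = -1" using C[of "4*k"] by (simp add: wd abs_le_iff; arith)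
  have kb: "v (4*k+1) = - v (4*k)" using K by (simp add: Kp_def)
  have P: "(v i + v (k+i) = -1 \<longrightarrow> v i = w i \<and> v (k+i) = w (k+i)) \<and> (v i + v (k+i) = 0 \<longrightarrow> v i = 0 \<and> v (k+i) = 0)
     \<and> (v (2*k+i) + v (3*k+i) = 1 \<longrightarrow> v (2*k+i) = w (2*k+i) \<and> v (3*k+i) = w (3*k+i))
     \<and> (v (2*k+i) + v (3*k+i) = 0 \<longrightarrow> v (2*k+i) = 0 \<and> v (3*k+i) = 0)" if i: "i<k" for i
  proof -
    have lt: "i < 4*k+2" "k+i < 4*k+2" "2*k+i<4*k+2" "3*k+i < 4*k+2" using i by auto
    have w1: "w i = - v1 i" "w (k+i) = -1 + v1 i" "w (2*k+i) = v2 i" "w (3*k+i) = 1 - v2 i"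
      using i by (simp_all add: wd)
    have p1: "(w i = 0 \<and> w (k+i) = -1) \<or> (w i = -1 \<and> w (k+i) = 0)" using b1 i w1 by auto
    have p2: "(w (2*k+i) = 0 \<and> w (3*k+i) = 1) \<or> (w (2*k+i) = 1 \<and> w (3*k+i) = 0)" using b2 i w1 by auto
    have A: "(v i + v (k+i) = -1 \<longrightarrow> v i = w i \<and> v (k+i) = w (k+i)) \<and> (v i + v (k+i) = 0 \<longrightarrow> v i = 0 \<and> v (k+i) = 0)"
      by (rule arith2[of "-1"]) (use p1 C[OF lt(1)] C[OF lt(2)] in auto)
    have B: "(v (2*k+i) + v (3*k+i) = 1 \<longrightarrow> v (2*k+i) = w (2*k+i) \<and> v (3*k+i) = w (3*k+i))
     \<and> (v (2*k+i) + v (3*k+i) = 0 \<longrightarrow> v (2*k+i) = 0 \<and> v (3*k+i) = 0)"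
      by (rule arith2[of "1"]) (use p2 C[OF lt(3)] C[OF lt(4)] in auto)
    show ?thesis using A B by blast
  qed
  have sums: "v i + v (k+i) = v (4*k)" "v (2*k+i) + v (3*k+i) = v (4*k+1)" if "i<k" for i
    using K that by (auto simp: Kp_def)
  have va: "v (4*k) = -1"
  proof (rule ccontr)
    assume "v (4*k) \<noteq> -1"
    then have z: "v (4*k) = 0" using ka by blast
    have "v = (\<lambda>_. 0)"
    proof (rule Kp_ext[OF K Kp_zero])
      show "\<forall>j<4*k+2. v j = 0"
      proof (rule all_idx)
        fix i assume i: "i<k"
        show "v i = 0 \<and> v (k+i) = 0 \<and> v (2*k+i) = 0 \<and> v (3*k+i) = 0"
          using P[OF i] sums[OF i] z kb by auto
      qed (use z kb in auto)
    qed
    with nz show False ..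
  qed
  show "v = w"
  proof (rule Kp_ext[OF K Kw])
    show "\<forall>j<4*k+2. v j = w j"
    proof (rule all_idx)
      fix i assume i: "i<k"
      show "v i = w i \<and> v (k+i) = w (k+i) \<and> v (2*k+i) = w (2*k+i) \<and> v (3*k+i) = w (3*k+i)"
        using P[OF i] sums[OF i] va kb by auto
    qed (use va kb wd in auto)
  qed
qed

lemma L3_P2:
  assumes w: "w \<in> P2 k" and K: "Kp k v" and nz: "v \<noteq> (\<lambda>_. 0)" and c: "conformal_le (4*k+2) v w"
  shows "v = w"
proof -
  obtain i0 where i0: "i0<k" and wd: "w = blocks k (unitv i0) (\<lambda>j. - unitv i0 j) (\<lambda>_. 0) (\<lambda>_. 0) 0 0"
    using w by (auto simp: P2_def)
  have Kw: "Kp k w" using L1_P2 w by blast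
  have C: "v j * w j \<ge> 0 \<and> \<bar>v j\<bar> \<le> \<bar>w j\<bar>" if "j < 4*k+2" for j using conf_at[OF c that] .
  have Z: "v j = 0" if "j < 4*k+2" "w j = 0" for j using C[OF that(1)] that(2) by simp
  have sums: "v i + v (k+i) = v (4*k)" "v (2*k+i) + v (3*k+i) = v (4*k+1)" if "i<k" for i
    using K that by (auto simp: Kp_def)
  have za: "v (4*k) = 0" "v (4*k+1) = 0" using Z[of "4*k"] Z[of "4*k+1"] by (auto simp: wd)
  have zo: "v i = 0 \<and> v (k+i) = 0 \<and> v (2*k+i) = 0 \<and> v (3*k+i) = 0" if "i<k" "i \<noteq> i0" for i
    using that Z[of i] Z[of "k+i"] Z[of "2*k+i"] Z[of "3*k+i"] by (auto simp: wd unitv_def)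
  have z34: "v (2*k+i0) = 0 \<and> v (3*k+i0) = 0"
    using i0 Z[of "2*k+i0"] Z[of "3*k+i0"] by (auto simp: wd)
  have c0: "v i0 = 0 \<or> v i0 = 1" using C[of i0] i0 by (auto simp: wd unitv_def)
  have v1: "v i0 = 1"
  proof (rule ccontr)
    assume "v i0 \<noteq> 1"
    then have z: "v i0 = 0" using c0 by blast
    have "v = (\<lambda>_. 0)"
    proof (rule Kp_ext[OF K Kp_zero])
      show "\<forall>j<4*k+2. v j = 0"
      proof (rule all_idx)
        fix i assume i: "i<k"
        show "v i = 0 \<and> v (k+i) = 0 \<and> v (2*k+i) = 0 \<and> v (3*k+i) = 0"
        proof (cases "i = i0")
          case True then show ?thesis using z z34 sums[OF i] za by auto
        qed (use zo i in auto)
      qed (use za in auto)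
    qed
    with nz show False ..
  qed
  show "v = w"
  proof (rule Kp_ext[OF K Kw])
    show "\<forall>j<4*k+2. v j = w j"
    proof (rule all_idx)
      fix i assume i: "i<k"
      show "v i = w i \<and> v (k+i) = w (k+i) \<and> v (2*k+i) = w (2*k+i) \<and> v (3*k+i) = w (3*k+i)"
      proof (cases "i = i0")
        case True then show ?thesis using v1 z34 sums[OF i] za i by (auto simp: wd unitv_def)
      qed (use zo i in \<open>auto simp: wd unitv_def\<close>)
    qed (use za wd in auto)
  qed
qed

lemma L3_P3:
  assumes w: "w \<in> P3 k" and K: "Kp k v" and nz: "v \<noteq> (\<lambda>_. 0)" and c: "conformal_le (4*k+2) v w"
  shows "v = w"
proof -
  obtain i0 where i0: "i0<k" and wd: "w = blocks k (\<lambda>_. 0) (\<lambda>_. 0) (unitv i0) (\<lambda>j. - unitv i0 j) 0 0"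
    using w by (auto simp: P3_def)
  have Kw: "Kp k w" using L1_P3 w by blast
  have C: "v j * w j \<ge> 0 \<and> \<bar>v j\<bar> \<le> \<bar>w j\<bar>" if "j < 4*k+2" for j using conf_at[OF c that] .
  have Z: "v j = 0" if "j < 4*k+2" "w j = 0" for j using C[OF that(1)] that(2) by simp
  have sums: "v i + v (k+i) = v (4*k)" "v (2*k+i) + v (3*k+i) = v (4*k+1)" if "i<k" for i
    using K that by (auto simp: Kp_def)
  have za: "v (4*k) = 0" "v (4*k+1) = 0" using Z[of "4*k"] Z[of "4*k+1"] by (auto simp: wd)
  have zo: "v i = 0 \<and> v (k+i) = 0 \<and> v (2*k+i) = 0 \<and> v (3*k+i) = 0" if "i<k" "i \<noteq> i0" for i
    using that Z[of i] Z[of "k+i"] Z[of "2*k+i"] Z[of "3*k+i"] by (auto simp: wd unitv_def)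
  have z12: "v i0 = 0 \<and> v (k+i0) = 0"
    using i0 Z[of "i0"] Z[of "k+i0"] by (auto simp: wd)
  have c0: "v (2*k+i0) = 0 \<or> v (2*k+i0) = 1" using C[of "2*k+i0"] i0 by (auto simp: wd unitv_def)
  have v1: "v (2*k+i0) = 1"
  proof (rule ccontr)
    assume "v (2*k+i0) \<noteq> 1"
    then have z: "v (2*k+i0) = 0" using c0 by blast
    have "v = (\<lambda>_. 0)"
    proof (rule Kp_ext[OF K Kp_zero])
      show "\<forall>j<4*k+2. v j = 0"
      proof (rule all_idx)
        fix i assume i: "i<k"
        show "v i = 0 \<and> v (k+i) = 0 \<and> v (2*k+i) = 0 \<and> v (3*k+i) = 0"
        proof (cases "i = i0")
          case True then show ?thesis using z z12 sums[OF i] za by auto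
        qed (use zo i in auto)
      qed (use za in auto)
    qed
    with nz show False ..
  qed
  show "v = w"
  proof (rule Kp_ext[OF K Kw])
    show "\<forall>j<4*k+2. v j = w j"
    proof (rule all_idx)
      fix i assume i: "i<k"
      show "v i = w i \<and> v (k+i) = w (k+i) \<and> v (2*k+i) = w (2*k+i) \<and> v (3*k+i) = w (3*k+i)"
      proof (cases "i = i0")
        case True then show ?thesis using v1 z12 sums[OF i] za i by (auto simp: wd unitv_def)
      qed (use zo i in \<open>auto simp: wd unitv_def\<close>)
    qed (use za wd in auto)
  qed
qed

lemma L3P:
  assumes "w \<in> P1 k \<union> P2 k \<union> P3 k" "Kp k v" "v \<noteq> (\<lambda>_. 0)" "conformal_le (4*k+2) v w"
  shows "v = w"
  using assms L3_P1 L3_P2 L3_P3 by blast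

lemma L3:
  assumes u: "u \<in> S1 k \<union> S2 k \<union> S3 k" and K: "Kp k v" and nz: "v \<noteq> (\<lambda>_. 0)"
    and c: "conformal_le (4*k+2) v u"
  shows "v = u"
proof -
  have "u \<in> P1 k \<union> P2 k \<union> P3 k \<or> (\<exists>y \<in> P1 k \<union> P2 k \<union> P3 k. u = - y)"
    using u unfolding S_eq pm_def by blast
  then show ?thesis
  proof
    assume "u \<in> P1 k \<union> P2 k \<union> P3 k" then show ?thesis using L3P K nz c by blast
  next
    assume "\<exists>y \<in> P1 k \<union> P2 k \<union> P3 k. u = - y"
    then obtain y where y: "y \<in> P1 k \<union> P2 k \<union> P3 k" and uy: "u = - y" by blast
    have c': "conformal_le (4*k+2) (- v) y" using conf_neg[of "4*k+2" v y] c uy by simp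
    have e: "- v = y" using L3P[OF y Kp_neg[OF K] nz_neg[OF nz] c'] .
    have "v = - (- v)" by (simp add: fun_eq_iff)
    also have "\<dots> = - y" using e by simp
    finally show ?thesis using uy by simp
  qed
qed

lemma a_S1: "u \<in> S1 k \<Longrightarrow> u (4*k) = 1 \<or> u (4*k) = -1"
  unfolding S_eq pm_def P1_def by auto

lemma a_S2: "u \<in> S2 k \<Longrightarrow> u (4*k) = 0"
  unfolding S_eq pm_def P2_def by auto

lemma a_S3: "u \<in> S3 k \<Longrightarrow> u (4*k) = 0"
  unfolding S_eq pm_def P3_def by auto

lemma S2_nz: "u \<in> S2 k \<Longrightarrow> \<exists>i<k. u i \<noteq> 0"
  unfolding S_eq pm_def P2_def by (auto simp: unitv_def)

lemma S3_z: "u \<in> S3 k \<Longrightarrow> i < k \<Longrightarrow> u i = 0"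
  unfolding S_eq pm_def P3_def by auto

lemma graver_char: "u \<in> graver_basis (2*k+1) (4*k+2) (A_mat k) \<longleftrightarrow> Kp k u \<and> u \<noteq> (\<lambda>_. 0)
   \<and> (\<forall>v. Kp k v \<longrightarrow> v \<noteq> (\<lambda>_. 0) \<longrightarrow> conformal_le (4*k+2) v u \<longrightarrow> v = u)"
  unfolding graver_basis_def using kernel_iff[of _ k] by blast

theorem theorem2:
  fixes k :: nat
  assumes "k \<ge> 1"
  shows "graver_basis (2*k+1) (4*k+2) (A_mat k) = S1 k \<union> S2 k \<union> S3 k
       \<and> S1 k \<inter> S2 k = {} \<and> S1 k \<inter> S3 k = {} \<and> S2 k \<inter> S3 k = {}"
proof (intro conjI)
  show "graver_basis (2*k+1) (4*k+2) (A_mat k) = S1 k \<union> S2 k \<union> S3 k"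
  proof
    show "graver_basis (2*k+1) (4*k+2) (A_mat k) \<subseteq> S1 k \<union> S2 k \<union> S3 k"
    proof
      fix u assume u: "u \<in> graver_basis (2*k+1) (4*k+2) (A_mat k)"
      then have Ku: "Kp k u" and nz: "u \<noteq> (\<lambda>_. 0)"
        and mn: "\<And>v. Kp k v \<Longrightarrow> v \<noteq> (\<lambda>_. 0) \<Longrightarrow> conformal_le (4*k+2) v u \<Longrightarrow> v = u"
        unfolding graver_char by auto
      obtain w where w: "w \<in> S1 k \<union> S2 k \<union> S3 k" "conformal_le (4*k+2) w u"
        using L2[OF Ku nz] by blast
      have "w = u" using mn L1[OF w(1)] w(2) by blast
      with w(1) show "u \<in> S1 k \<union> S2 k \<union> S3 k" by simp
    qed
  next
    show "S1 k \<union> S2 k \<union> S3 k \<subseteq> graver_basis (2*k+1) (4*k+2) (A_mat k)"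
    proof
      fix u assume u: "u \<in> S1 k \<union> S2 k \<union> S3 k"
      show "u \<in> graver_basis (2*k+1) (4*k+2) (A_mat k)"
        unfolding graver_char using L1[OF u] L3[OF u] by blast
    qed
  qed
next
  show "S1 k \<inter> S2 k = {}" using a_S1 a_S2 by force
next
  show "S1 k \<inter> S3 k = {}" using a_S1 a_S3 by force
next
  show "S2 k \<inter> S3 k = {}" using S2_nz S3_z by blast
qed

end
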